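(* For every $x>0$ the limit $\lambda(x)=\lim_{k\to\infty}\frac{a(s^kx)}{(s^kx)^{\log_s p}}$ exists; moreover $\lambda(sx)=\lambda(x)$ and $\lambda(x)\in[m,M]$ for all $x>0$, where $m=\inf_{n\ge1}b_n$, $M=\sup_{n\ge1}b_n$. Furthermore the set $\{\lambda(x):x\in[s^{-1},1)\}$ is dense in $[m,M]$.
   Context: Fix integers $p\ge 3$ and $2\le s<p$, and a set $A\subset\{0,1,\dots,p-1\}$ with $\#A=s$. Let $h:\{0,1,\dots,s-1\}\to A$ be the unique strictly increasing bijection. For a positive integer $n$ with base-$s$ expansion $n=\sum_{i=0}^k\varepsilon_i s^i$ ($\varepsilon_i\in\{0,\dots,s-1\}$, $\varepsilon_k\ne 0$), put $a_n=\sum_{i=0}^k h(\varepsilon_i)p^i$, and put $a_0=h(0)$. Let $b_n=a_n/n^{\log_s p}$ for $n\ge1$. For real $x\ge0$ let $a(x)=a_{\lfloor x\rfloor}$. *)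

theory Defs
  imports "HOL-Analysis.Analysis"
begin

definition digit_map :: "nat set \<Rightarrow> nat \<Rightarrow> nat" where
  "digit_map A i = sorted_list_of_set A ! i"

text \<open>a_n = sum_i h(eps_i) p^i where n = sum_i eps_i s^i in base s; a_0 = h(0).\<close>
fun seq_a :: "nat \<Rightarrow> nat \<Rightarrow> nat set \<Rightarrow> nat \<Rightarrow> nat" where
  "seq_a p s A n =
     (if n < s \<or> s < 2 then digit_map A n
      else digit_map A (n mod s) + p * seq_a p s A (n div s))"

definition seq_b :: "nat \<Rightarrow> nat \<Rightarrow> nat set \<Rightarrow> nat \<Rightarrow> real" where
  "seq_b p s A n = real (seq_a p s A n) / real n powr log s p"

definition a_real :: "nat \<Rightarrow> nat \<Rightarrow> nat set \<Rightarrow> real \<Rightarrow> real" where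
  "a_real p s A x = real (seq_a p s A (nat \<lfloor>x\<rfloor>))"

end

theory Submission
  imports Defs
begin


declare seq_a.simps[simp del]

locale L =
  fixes p s :: nat and A :: "nat set"
  assumes p3: "p \<ge> 3" and s2: "2 \<le> s" and sp: "s < p"
    and Asub: "A \<subseteq> {0..<p}" and cardA: "card A = s"
begin

abbreviation "h \<equiv> digit_map A"
abbreviation "a \<equiv> seq_a p s A"
definition "pm = p - 1"
lemma p_eq: "p = pm + 1" using p3 pm_def by simp

lemma pm_mul: "p * x = pm * x + x" using p3 unfolding pm_def
  by (metis Suc_diff_1 add.commute less_le_trans mult_Suc not_less numeral_3_eq_3 zero_less_Suc)

lemma finA: "finite A" using Asub finite_subset by blast

lemma h_in: "i < s \<Longrightarrow> h i \<in> A"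
  unfolding digit_map_def
  by (metis cardA finA length_sorted_list_of_set nth_mem set_sorted_list_of_set)

lemma h_lt: "i < s \<Longrightarrow> h i < p" using h_in[of i] Asub by (meson atLeastLessThan_iff subsetD)
lemma h_le: "i < s \<Longrightarrow> h i \<le> pm" using h_lt p_eq by fastforce

lemma h_strict: "i < j \<Longrightarrow> j < s \<Longrightarrow> h i < h j"
  unfolding digit_map_def
  by (metis cardA length_sorted_list_of_set sorted_wrt_nth_less strict_sorted_list_of_set)

lemma a_small: "n < s \<Longrightarrow> a n = h n"
  by (subst seq_a.simps) simp

lemma a_rec: "n \<ge> 1 \<Longrightarrow> d < s \<Longrightarrow> a (n * s + d) = h d + p * a n"
proof -
  assume n: "n \<ge> 1" and d: "d < s"
  have "n * s + d \<ge> s" using n by (metis le_add1 mult_1 mult_le_mono1 order_trans)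
  moreover have "(n * s + d) mod s = d" using d by simp
  moreover have "(n * s + d) div s = n" using d by simp
  ultimately show ?thesis using s2 by (subst seq_a.simps) simp
qed

lemma a_decomp: "n \<ge> s \<Longrightarrow> a n = h (n mod s) + p * a (n div s)"
  by (subst seq_a.simps) (use s2 in simp)

lemma B: "n \<ge> 1 \<Longrightarrow> pm * a(n-1) + h(s-1) \<le> pm * a n"
proof (induction n rule: less_induct)
  case (less n)
  have hs: "h (s-1) \<le> pm" using h_le[of "s-1"] s2 by simp
  show ?case
  proof (cases "n < s")
    case True
    have "h (n-1) + 1 \<le> h n" using h_strict[of "n-1" n] True less.prems by simp
    hence "pm * h(n-1) + pm \<le> pm * h n"
      by (metis add_mult_distrib2 mult.right_neutral mult_le_mono2)
    then show ?thesis using True a_small hs by simp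
  next
    case False
    define q where "q = n div s"
    define d where "d = n mod s"
    have q1: "q \<ge> 1" using False s2 q_def by (simp add: Suc_le_eq div_greater_zero_iff)
    have ql: "q < n" using q_def s2 False by (simp add: div_less_dividend)
    have nd: "n = q * s + d" using q_def d_def by simp
    have ds: "d < s" using d_def s2 by simp
    show ?thesis
    proof (cases "d \<ge> 1")
      case True
      have "n - 1 = q * s + (d-1)" using nd True by simp
      hence e1: "a (n-1) = h (d-1) + p * a q" using a_rec q1 ds by simp
      have e2: "a n = h d + p * a q" using a_rec q1 ds nd by simp
      have "h (d-1) + 1 \<le> h d" using h_strict[of "d-1" d] True ds by simp
      hence "pm * h(d-1) + pm \<le> pm * h d"
        by (metis add_mult_distrib2 mult.right_neutral mult_le_mono2)
      thus ?thesis using e1 e2 hs by (simp add: algebra_simps)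
    next
      case False
      hence d0: "d = 0" by simp
      have e2: "a n = h 0 + p * a q" using a_rec[of q 0] q1 s2 nd d0 by simp
      show ?thesis
      proof (cases "q = 1")
        case True
        have "n - 1 = s - 1" using nd d0 True by simp
        hence e1: "a (n-1) = h (s-1)" using a_small s2 by simp
        have h1: "h 1 \<ge> 1" using h_strict[of 0 1] s2 by simp
        have "pm * h(s-1) + h(s-1) = p * h(s-1)" using pm_mul by simp
        also have "\<dots> \<le> p * pm" using hs by simp
        also have "\<dots> \<le> pm * (p * h 1)" using h1 by simp
        also have "\<dots> \<le> pm * (h 0 + p * h 1)" by simp
        finally show ?thesis using e1 e2 True a_small s2 by simp
      next
        case False
        hence q2: "q - 1 \<ge> 1" using q1 by simp
        have "n - 1 = (q-1) * s + (s-1)" using nd d0 q1 s2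
          by (simp add: algebra_simps)
        hence e1: "a (n-1) = h (s-1) + p * a (q-1)" using a_rec[OF q2, of "s-1"] s2 by simp
        have IH: "pm * a(q-1) + h(s-1) \<le> pm * a q" using less.IH[OF ql q1] .
        have "pm * a(n-1) + h(s-1) = p * (pm * a(q-1) + h(s-1))"
          using e1 pm_mul[of "pm * a(q-1) + h(s-1)"] pm_mul[of "h(s-1)"] by (simp add: algebra_simps)
        also have "\<dots> \<le> p * (pm * a q)" using IH by simp
        also have "\<dots> \<le> pm * a n" using e2 by (simp add: algebra_simps)
        finally show ?thesis .
      qed
    qed
  qed
qed

end

context L begin

lemma pm_pos: "pm \<ge> 2" using p3 pm_def by simp
lemma pm_gt0: "0 < pm" using pm_pos by simp

lemma a_step: "a n \<le> a (Suc n)"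
proof -
  have "pm * a n + h(s-1) \<le> pm * a (Suc n)" using B[of "Suc n"] by simp
  hence "pm * a n \<le> pm * a (Suc n)" by linarith
  thus ?thesis using pm_gt0 by simp
qed

lemma a_mono: "m \<le> n \<Longrightarrow> a m \<le> a n"
  using a_step by (rule lift_Suc_mono_le)

lemma C: "n \<ge> 1 \<Longrightarrow> pm * a(n * s^j - 1) + h(s-1) \<le> pm * (p^j * a n)"
proof (induction j)
  case 0
  then show ?case using B by simp
next
  case (Suc j)
  have hs: "h (s-1) \<le> pm" using h_le[of "s-1"] s2 by simp
  have pos: "n * s^j \<ge> 1" using Suc.prems s2 by simp
  show ?case
  proof (cases "n * s^j - 1 \<ge> 1")
    case True
    have "n * s^(Suc j) - 1 = (n * s^j - 1) * s + (s - 1)" using pos s2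
      by (simp add: algebra_simps)
    hence e: "a (n * s^(Suc j) - 1) = h (s-1) + p * a (n * s^j - 1)"
      using a_rec[OF True, of "s-1"] s2 by simp
    have "pm * a(n * s^(Suc j) - 1) + h(s-1) = p * (pm * a(n * s^j - 1) + h(s-1))"
      using e pm_mul[of "pm * a(n * s^j - 1) + h(s-1)"] pm_mul[of "h(s-1)"] by (simp add: algebra_simps)
    also have "\<dots> \<le> p * (pm * (p^j * a n))" using Suc.IH Suc.prems by simp
    finally show ?thesis by (simp add: algebra_simps)
  next
    case False
    hence "n * s^j = 1" using pos by linarith
    hence n1: "n = 1" and sj: "s^j = 1" by auto
    have "j = 0" using sj s2 by (cases j) auto
    note nj = n1 this
    have "n * s^(Suc j) - 1 = s - 1" using nj by simp
    hence e: "a (n * s^(Suc j) - 1) = h (s-1)" using a_small s2 by simp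
    have h1: "h 1 \<ge> 1" using h_strict[of 0 1] s2 by simp
    have a1: "a 1 = h 1" using a_small s2 by simp
    have "pm * h(s-1) + h(s-1) = p * h(s-1)" using pm_mul by simp
    also have "\<dots> \<le> p * pm" using hs by simp
    also have "\<dots> \<le> pm * (p * h 1)" using h1 by simp
    finally show ?thesis using e nj a1 by simp
  qed
qed

lemma C': "n \<ge> 1 \<Longrightarrow> a(n * s^j - 1) \<le> p^j * a n"
proof -
  assume "n \<ge> 1"
  hence "pm * a(n * s^j - 1) \<le> pm * (p^j * a n)" using C[of n j] by linarith
  thus ?thesis using pm_gt0 by simp
qed

end

context L begin

definition "al = log (real s) (real p)"

lemma s_gt1: "real s > 1" using s2 by simp
lemma p_gt1: "real p > 1" using p3 by simp
lemma al_ge1: "al \<ge> 1"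
  unfolding al_def using s_gt1 sp by simp
lemma al_pos: "al > 0" using al_ge1 by simp

lemma spow: "real s powr al = real p"
  unfolding al_def using s_gt1 p_gt1 by simp

lemma powk: "(real s ^ k) powr al = real p ^ k"
proof -
  have "(real s ^ k) powr al = (real s powr al) ^ k"
    using s_gt1 by (simp add: powr_realpow[symmetric] powr_powr powr_power mult.commute)
  thus ?thesis using spow by simp
qed

lemma bound_a: "n \<ge> 1 \<Longrightarrow> real (a n) + 1 \<le> real p * real n powr al"
proof (induction n rule: less_induct)
  case (less n)
  show ?case
  proof (cases "n < s")
    case True
    have "real (h n) + 1 \<le> real p" using h_lt[OF True] by linarith
    moreover have "real n powr al \<ge> 1" using less.prems al_pos
      by (simp add: ge_one_powr_ge_zero)
    ultimately have "real (h n) + 1 \<le> real p * real n powr al"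
      by (metis mult.right_neutral mult_left_mono of_nat_0_le_iff order_trans)
    thus ?thesis using a_small True by simp
  next
    case False
    define q where "q = n div s"
    define d where "d = n mod s"
    have q1: "q \<ge> 1" using False s2 q_def by (simp add: Suc_le_eq div_greater_zero_iff)
    have ql: "q < n" using q_def s2 False by (simp add: div_less_dividend)
    have nd: "n = q * s + d" using q_def d_def by simp
    have ds: "d < s" using d_def s2 by simp
    have e: "a n = h d + p * a q" using a_rec q1 ds nd by simp
    have IH: "real (a q) + 1 \<le> real p * real q powr al" using less.IH[OF ql q1] .
    have hd: "real (h d) + 1 \<le> real p" using h_lt[OF ds] by linarith
    have "real (a n) + 1 = (real (h d) + 1) + real p * real (a q)" using e by simp
    also have "\<dots> \<le> real p + real p * (real p * real q powr al - 1)"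
      using hd IH by (smt (verit) mult_left_mono of_nat_0_le_iff)
    also have "\<dots> = real p * (real p * real q powr al)" by (simp add: algebra_simps)
    also have "\<dots> = real p * ((real q * real s) powr al)"
      using spow by (simp add: powr_mult)
    also have "\<dots> \<le> real p * real n powr al"
      using nd al_pos by (intro mult_left_mono powr_mono2) auto
    finally show ?thesis .
  qed
qed

definition "b n = real (a n) / real n powr al"

lemma b_nonneg: "b n \<ge> 0" unfolding b_def by simp
lemma b_le: "n \<ge> 1 \<Longrightarrow> b n \<le> real p"
proof -
  assume n: "n \<ge> 1"
  have pos: "real n powr al > 0" using n by simp
  have "real (a n) \<le> real p * real n powr al" using bound_a[OF n] by linarith
  thus ?thesis unfolding b_def using pos by (simp add: divide_le_eq)
qed

end

context L begin

definition "N k x = nat \<lfloor>real s ^ k * x\<rfloor>"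
definition "g k x = real (a (N k x)) / real p ^ k"
definition "G x = lim (\<lambda>k. g k x)"

lemma floor_div: "y \<ge> 0 \<Longrightarrow> nat \<lfloor>real s * y\<rfloor> div s = nat \<lfloor>y\<rfloor>"
proof -
  assume y: "y \<ge> 0"
  define n where "n = nat \<lfloor>y\<rfloor>"
  have n1: "real n \<le> y" "y < real n + 1" using y n_def by linarith+
  have "real s * real n \<le> real s * y" using n1 by (intro mult_left_mono) auto
  moreover have "real s * y < real s * real n + real s" using n1 s_gt1
    by (metis distrib_left mult.right_neutral mult_strict_left_mono of_nat_0_less_iff less_trans zero_less_one)
  ultimately have f1: "int (s * n) \<le> \<lfloor>real s * y\<rfloor>" and f2: "\<lfloor>real s * y\<rfloor> < int (s * n + s)"
    by (simp_all add: le_floor_iff floor_less_iff)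
  have z: "\<lfloor>real s * y\<rfloor> \<ge> 0" using f1 by linarith
  have "s * n \<le> nat \<lfloor>real s * y\<rfloor>" "nat \<lfloor>real s * y\<rfloor> < s * n + s"
    using f1 f2 z by (simp_all add: le_nat_iff nat_less_iff)
  thus ?thesis unfolding n_def[symmetric] by (intro div_nat_eqI) auto
qed

lemma N_Suc_div: "x > 0 \<Longrightarrow> N (Suc k) x div s = N k x"
  unfolding N_def using floor_div[of "real s ^ k * x"] by (simp add: mult.assoc)

lemma N_Suc_decomp: "x > 0 \<Longrightarrow> N (Suc k) x = N k x * s + N (Suc k) x mod s"
  using N_Suc_div by (metis div_mult_mod_eq)

lemma N_mono_k: "x > 0 \<Longrightarrow> N k x \<le> N (Suc k) x"
  using N_Suc_div[of x k] s2 by (metis div_le_dividend)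

lemma N_mono_x: "x \<le> y \<Longrightarrow> N k x \<le> N k y"
  unfolding N_def by (intro nat_mono floor_mono mult_left_mono) auto

lemma g_step: "x > 0 \<Longrightarrow> N k x \<ge> 1 \<Longrightarrow> g k x \<le> g (Suc k) x"
proof -
  assume x: "x > 0" and n: "N k x \<ge> 1"
  have ms: "N (Suc k) x mod s < s" using s2 by simp
  have "a (N (Suc k) x) = h (N (Suc k) x mod s) + p * a (N k x)"
    using a_rec[OF n ms] N_Suc_decomp[OF x] by metis
  hence "real p * real (a (N k x)) \<le> real (a (N (Suc k) x))" by simp
  thus ?thesis unfolding g_def using p_gt1 by (simp add: field_simps)
qed

lemma N_ge1_mono: "x > 0 \<Longrightarrow> N k x \<ge> 1 \<Longrightarrow> k \<le> j \<Longrightarrow> N j x \<ge> 1"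
proof -
  assume x: "x > 0" and n: "N k x \<ge> 1" and kj: "k \<le> j"
  from kj show ?thesis
  proof (induction j rule: dec_induct)
    case (step j) thus ?case using N_mono_k[OF x, of j] by linarith
  qed (rule n)
qed

lemma g_mono_k: "x > 0 \<Longrightarrow> N k x \<ge> 1 \<Longrightarrow> k \<le> j \<Longrightarrow> g k x \<le> g j x"
proof -
  assume x: "x > 0" and n: "N k x \<ge> 1" and kj: "k \<le> j"
  from kj show ?thesis
  proof (induction j rule: dec_induct)
    case (step j) thus ?case using g_step[OF x, of j] N_ge1_mono[OF x n, of j] by fastforce
  qed simp
qed

lemma N_ev: "x > 0 \<Longrightarrow> \<exists>k0. N k0 x \<ge> 1"
proof -
  assume x: "x > 0"
  obtain k where "1 / x < real s ^ k" using real_arch_pow[OF s_gt1] by blast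
  hence "1 \<le> real s ^ k * x" using x by (simp add: field_simps)
  hence "N k x \<ge> 1" unfolding N_def by linarith
  thus ?thesis by blast
qed

lemma g_bound: "x > 0 \<Longrightarrow> N k x \<ge> 1 \<Longrightarrow> g k x \<le> real p * x powr al"
proof -
  assume x: "x > 0" and n: "N k x \<ge> 1"
  have "real (N k x) \<le> real s ^ k * x" unfolding N_def using x by simp
  hence "real (N k x) powr al \<le> (real s ^ k * x) powr al"
    using al_pos by (intro powr_mono2) auto
  also have "\<dots> = real p ^ k * x powr al" using powk by (simp add: powr_mult)
  finally have "real (a (N k x)) \<le> real p * (real p ^ k * x powr al)"
    using bound_a[OF n] by (smt (verit) mult_left_mono of_nat_0_le_iff)
  thus ?thesis unfolding g_def using p_gt1 by (simp add: field_simps)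
qed

lemma g_conv: "x > 0 \<Longrightarrow> (\<lambda>k. g k x) \<longlonglongrightarrow> G x"
proof -
  assume x: "x > 0"
  obtain k0 where k0: "N k0 x \<ge> 1" using N_ev[OF x] by blast
  have inc: "incseq (\<lambda>i. g (i + k0) x)"
    by (rule incseq_SucI) (use g_step[OF x] N_ge1_mono[OF x k0] in simp)
  have bd: "\<forall>i. g (i + k0) x \<le> real p * x powr al"
    using g_bound[OF x] N_ge1_mono[OF x k0] by simp
  obtain L where "(\<lambda>i. g (i + k0) x) \<longlonglongrightarrow> L" using incseq_convergent[OF inc bd] by blast
  hence "(\<lambda>k. g k x) \<longlonglongrightarrow> L" by (rule LIMSEQ_offset)
  thus ?thesis unfolding G_def by (simp add: limI)
qed

lemma G_ge_g: "x > 0 \<Longrightarrow> N k x \<ge> 1 \<Longrightarrow> g k x \<le> G x"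
  using g_conv[of x] g_mono_k[of x k] by (intro LIMSEQ_le_const) auto

lemma G_mono: "0 < x \<Longrightarrow> x \<le> y \<Longrightarrow> G x \<le> G y"
proof -
  assume x: "0 < x" and xy: "x \<le> y"
  have "\<forall>k. g k x \<le> g k y" unfolding g_def
    using a_mono N_mono_x[OF xy] by (simp add: divide_right_mono)
  thus ?thesis using g_conv[OF x] g_conv[of y] x xy by (intro LIMSEQ_le) auto
qed

end

context L begin

lemma N_scale: "N k (real s * x) = N (Suc k) x"
  unfolding N_def by (simp add: mult.assoc mult.left_commute)

lemma g_scale: "g k (real s * x) = real p * g (Suc k) x"
  unfolding g_def N_scale using p_gt1 by (simp add: field_simps)

lemma G_scale: "x > 0 \<Longrightarrow> G (real s * x) = real p * G x"
proof -
  assume x: "x > 0"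
  have "(\<lambda>k. g k (real s * x)) \<longlonglongrightarrow> G (real s * x)" using g_conv x s_gt1 by simp
  moreover have "(\<lambda>k. g k (real s * x)) \<longlonglongrightarrow> real p * G x"
    unfolding g_scale by (intro tendsto_mult_left LIMSEQ_Suc g_conv x)
  ultimately show ?thesis using LIMSEQ_unique by blast
qed

lemma G_ge_a: "n \<ge> 1 \<Longrightarrow> real (a n) \<le> G (real n)"
proof -
  assume n: "n \<ge> 1"
  have "N 0 (real n) = n" unfolding N_def by simp
  hence "g 0 (real n) = real (a n)" unfolding g_def by simp
  thus ?thesis using G_ge_g[of "real n" 0] n \<open>N 0 (real n) = n\<close> by simp
qed

lemma G_le_a: "n \<ge> 1 \<Longrightarrow> 0 < x \<Longrightarrow> x < real n \<Longrightarrow> G x \<le> real (a n)"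
proof -
  assume n: "n \<ge> 1" and x: "0 < x" "x < real n"
  have "\<forall>k. g k x \<le> real (a n)"
  proof
    fix k
    have "real s ^ k * x < real s ^ k * real n" using x s_gt1 by simp
    hence "\<lfloor>real s ^ k * x\<rfloor> < int (n * s ^ k)" by (simp add: floor_less_iff mult.commute)
    hence "N k x \<le> n * s ^ k - 1" unfolding N_def by linarith
    hence "a (N k x) \<le> a (n * s ^ k - 1)" by (rule a_mono)
    also have "\<dots> \<le> p ^ k * a n" by (rule C'[OF n])
    finally have "real (a (N k x)) \<le> real p ^ k * real (a n)"
      by (metis of_nat_le_iff of_nat_mult of_nat_power)
    thus "g k x \<le> real (a n)" unfolding g_def using p_gt1 by (simp add: field_simps)
  qed
  thus ?thesis using g_conv[OF x(1)] by (intro LIMSEQ_le_const2) auto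
qed

definition "Mb = (SUP n\<in>{1::nat..}. b n)"
definition "mb = (INF n\<in>{1::nat..}. b n)"

lemma bddA: "bdd_above (b ` {1..})"
  using b_le by (intro bdd_aboveI[of _ "real p"]) auto
lemma bddB: "bdd_below (b ` {1..})"
  using b_nonneg by (intro bdd_belowI[of _ 0]) auto

lemma b_le_M: "n \<ge> 1 \<Longrightarrow> b n \<le> Mb"
  unfolding Mb_def using bddA by (intro cSUP_upper) auto
lemma m_le_b: "n \<ge> 1 \<Longrightarrow> mb \<le> b n"
  unfolding mb_def using bddB by (intro cINF_lower) auto
lemma m_nonneg: "mb \<ge> 0"
  unfolding mb_def using b_nonneg by (intro cINF_greatest) auto
lemma M_nonneg: "Mb \<ge> 0" using b_le_M[of 1] b_nonneg[of 1] by simp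

lemma a_le_M: "n \<ge> 1 \<Longrightarrow> real (a n) \<le> Mb * real n powr al"
  using b_le_M[of n] unfolding b_def by (simp add: divide_le_eq)
lemma a_ge_m: "n \<ge> 1 \<Longrightarrow> mb * real n powr al \<le> real (a n)"
  using m_le_b[of n] unfolding b_def by (simp add: le_divide_eq)

lemma G_le_M: "x > 0 \<Longrightarrow> G x \<le> Mb * x powr al"
proof -
  assume x: "x > 0"
  obtain k0 where k0: "N k0 x \<ge> 1" using N_ev[OF x] by blast
  have "\<forall>k\<ge>k0. g k x \<le> Mb * x powr al"
  proof (intro allI impI)
    fix k assume "k \<ge> k0"
    hence n: "N k x \<ge> 1" using N_ge1_mono[OF x k0] by simp
    have "real (N k x) \<le> real s ^ k * x" unfolding N_def using x by simp
    hence "real (N k x) powr al \<le> (real s ^ k * x) powr al"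
      using al_pos by (intro powr_mono2) auto
    also have "\<dots> = real p ^ k * x powr al" using powk by (simp add: powr_mult)
    finally have "real (a (N k x)) \<le> Mb * (real p ^ k * x powr al)"
      using a_le_M[OF n] M_nonneg by (smt (verit) mult_left_mono)
    thus "g k x \<le> Mb * x powr al" unfolding g_def using p_gt1 by (simp add: field_simps)
  qed
  thus ?thesis using g_conv[OF x] by (intro LIMSEQ_le_const2) auto
qed

lemma G_ge_m: "x > 0 \<Longrightarrow> mb * x powr al \<le> G x"
proof -
  assume x: "x > 0"
  obtain k0 where "1 / x < real s ^ k0" using real_arch_pow[OF s_gt1] by blast
  hence k0: "1 < real s ^ k0 * x" using x by (simp add: field_simps)
  have lim: "(\<lambda>k. mb * (x - (1 / real s) ^ k) powr al) \<longlonglongrightarrow> mb * (x - 0) powr al"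
    using s_gt1 x by (intro tendsto_intros LIMSEQ_realpow_zero) auto
  have "\<forall>k\<ge>k0. mb * (x - (1 / real s) ^ k) powr al \<le> g k x"
  proof (intro allI impI)
    fix k assume kk: "k \<ge> k0"
    have "real s ^ k0 \<le> real s ^ k" using kk s_gt1 by (simp add: power_increasing)
    hence big: "1 < real s ^ k * x" using k0 x by (smt (verit) mult_right_mono)
    hence n: "N k x \<ge> 1" unfolding N_def by linarith
    have spos: "real s ^ k > 0" using s_gt1 by simp
    have "real s ^ k * x - 1 \<le> real (N k x)" unfolding N_def using big by linarith
    hence "(real s ^ k * x - 1) powr al \<le> real (N k x) powr al"
      using big al_pos by (intro powr_mono2) auto
    moreover have "real s ^ k * x - 1 = real s ^ k * (x - (1 / real s) ^ k)"
      using spos by (simp add: field_simps power_divide)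
    ultimately have "real p ^ k * (x - (1 / real s) ^ k) powr al \<le> real (N k x) powr al"
      using powk big spos
      by (metis powr_mult less_eq_real_def zero_le_power of_nat_0_le_iff zero_less_one less_trans
           diff_gt_0_iff_gt mult_pos_pos zero_less_mult_pos)
    hence "mb * (real p ^ k * (x - (1 / real s) ^ k) powr al) \<le> real (a (N k x))"
      using a_ge_m[OF n] m_nonneg by (smt (verit) mult_left_mono)
    thus "mb * (x - (1 / real s) ^ k) powr al \<le> g k x" unfolding g_def using p_gt1
      by (simp add: field_simps)
  qed
  hence "mb * (x - 0) powr al \<le> G x" using lim g_conv[OF x] by (intro LIMSEQ_le) auto
  thus ?thesis by simp
qed

end

context L begin

definition "lam x = G x / x powr al"

lemma lam_scale: "x > 0 \<Longrightarrow> lam (real s * x) = lam x"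
  unfolding lam_def using G_scale[of x] spow p_gt1 by (simp add: powr_mult)

lemma lam_scale_pow: "x > 0 \<Longrightarrow> lam (real s ^ k * x) = lam x"
proof (induction k)
  case (Suc k)
  have "lam (real s ^ Suc k * x) = lam (real s * (real s ^ k * x))" by (simp add: mult.assoc)
  also have "\<dots> = lam (real s ^ k * x)" using Suc.prems s_gt1 by (intro lam_scale) simp
  finally show ?case using Suc by simp
qed simp

lemma lam_range: "x > 0 \<Longrightarrow> lam x \<in> {mb..Mb}"
  unfolding lam_def using G_le_M[of x] G_ge_m[of x]
  by (simp add: divide_le_eq le_divide_eq)

lemma lam_ge_b: "n \<ge> 1 \<Longrightarrow> b n \<le> lam (real n)"
  unfolding lam_def b_def using G_ge_a[of n] by (simp add: divide_right_mono)

lemma lam_le: "n \<ge> 1 \<Longrightarrow> 0 < x \<Longrightarrow> x < real n \<Longrightarrow> lam x \<le> real (a n) / x powr al"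
  unfolding lam_def using G_le_a[of n x] by (simp add: divide_right_mono)

lemma lam_mono_le: "0 < x \<Longrightarrow> x \<le> y \<Longrightarrow> lam x \<le> G y / x powr al"
  unfolding lam_def using G_mono[of x y] by (simp add: divide_right_mono)

lemma lam_mono_ge: "0 < x \<Longrightarrow> x \<le> y \<Longrightarrow> G x / y powr al \<le> lam y"
  unfolding lam_def using G_mono[of x y] by (simp add: divide_right_mono)

lemma cont_below: "T > 0 \<Longrightarrow> c / T powr al < v \<Longrightarrow> \<exists>d>0. \<forall>x. dist x T < d \<longrightarrow> c / x powr al < v"
proof -
  assume T: "T > 0" and v: "c / T powr al < v"
  have "isCont (\<lambda>x. c / x powr al) T" using T by (intro continuous_intros) auto
  hence "((\<lambda>x. c / x powr al) \<longlongrightarrow> c / T powr al) (at T)" by (simp add: isCont_def)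
  hence "eventually (\<lambda>x. c / x powr al < v) (at T)" using v by (rule order_tendstoD)
  then obtain d where d: "d > 0" "\<forall>x. x \<noteq> T \<and> dist x T < d \<longrightarrow> c / x powr al < v"
    unfolding eventually_at by auto
  thus ?thesis using v by (metis)
qed

lemma cont_above: "T > 0 \<Longrightarrow> v < c / T powr al \<Longrightarrow> \<exists>d>0. \<forall>x. dist x T < d \<longrightarrow> v < c / x powr al"
proof -
  assume T: "T > 0" and v: "v < c / T powr al"
  have "isCont (\<lambda>x. c / x powr al) T" using T by (intro continuous_intros) auto
  hence "((\<lambda>x. c / x powr al) \<longlongrightarrow> c / T powr al) (at T)" by (simp add: isCont_def)
  hence "eventually (\<lambda>x. v < c / x powr al) (at T)" using v by (rule order_tendstoD)
  then obtain d where d: "d > 0" "\<forall>x. x \<noteq> T \<and> dist x T < d \<longrightarrow> v < c / x powr al"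
    unfolding eventually_at by auto
  thus ?thesis using v by (metis)
qed

end

context L begin

lemma dens:
  assumes t: "mb \<le> t" "t \<le> Mb" and r: "r > 0"
  shows "\<exists>x>0. \<bar>lam x - t\<bar> < r"
proof (rule ccontr)
  assume "\<not> ?thesis"
  hence H: "\<And>x. x > 0 \<Longrightarrow> lam x \<le> t - r \<or> lam x \<ge> t + r" by force
  have ne: "{1::nat..} \<noteq> {}" by auto
  have "t - r < Mb" using t r by simp
  then obtain n1 where n1: "n1 \<ge> 1" "t - r < b n1"
    unfolding Mb_def using less_cSUP_iff[OF ne bddA] by auto
  define x1 where "x1 = real n1"
  have x1p: "x1 > 0" using n1 x1_def by simp
  have lx1: "lam x1 \<ge> t + r" using lam_ge_b[OF n1(1)] n1(2) H[OF x1p] x1_def by force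
  have "mb < t + r" using t r by simp
  then obtain n2 where n2: "n2 \<ge> 1" "b n2 < t + r"
    unfolding mb_def using cINF_less_iff[OF ne bddB] by auto
  have n2p: "real n2 > 0" using n2 by simp
  obtain d where d: "d > 0" "\<forall>x. dist x (real n2) < d \<longrightarrow> real (a n2) / x powr al < t + r"
    using cont_below[OF n2p, of "real (a n2)" "t + r"] n2(2) unfolding b_def by auto
  define x2 where "x2 = real n2 - min d (real n2) / 2"
  have x2: "0 < x2" "x2 < real n2" "dist x2 (real n2) < d"
    using d(1) n2p unfolding x2_def dist_real_def by auto
  have "lam x2 < t + r" using lam_le[OF n2(1) x2(1) x2(2)] d(2) x2(3) by fastforce
  hence lx2: "lam x2 \<le> t - r" using H[OF x2(1)] by linarith
  obtain k where "x1 / x2 < real s ^ k" using real_arch_pow[OF s_gt1] by blast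
  define x3 where "x3 = real s ^ k * x2"
  have x13: "x1 < x3" using \<open>x1 / x2 < real s ^ k\<close> x2(1) unfolding x3_def
    by (simp add: divide_less_eq)
  have lx3: "lam x3 \<le> t - r" unfolding x3_def using lam_scale_pow[OF x2(1)] lx2 by simp
  define S where "S = {x. x1 \<le> x \<and> x \<le> x3 \<and> lam x \<le> t - r}"
  have x3S: "x3 \<in> S" using x13 lx3 S_def by simp
  have Sne: "S \<noteq> {}" using x3S by auto
  have Sbdd: "bdd_below S" unfolding S_def by (intro bdd_belowI[of _ x1]) auto
  define T where "T = Inf S"
  have T1: "x1 \<le> T" unfolding T_def using Sne by (intro cInf_greatest) (auto simp: S_def)
  have T3: "T \<le> x3" unfolding T_def using Sbdd x3S by (intro cInf_lower)
  have Tp: "T > 0" using T1 x1p by simp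
  have lamT: "lam T \<le> t - r"
  proof (rule ccontr)
    assume "\<not> lam T \<le> t - r"
    hence "lam T \<ge> t + r" using H[OF Tp] by linarith
    hence "t < G T / T powr al" using r unfolding lam_def by simp
    then obtain e where e: "e > 0" "\<forall>x. dist x T < e \<longrightarrow> t < G T / x powr al"
      using cont_above[OF Tp] by blast
    have "Inf S < T + e" using e(1) T_def by simp
    then obtain y where y: "y \<in> S" "y < T + e" using cInf_less_iff[OF Sne Sbdd] by blast
    have yT: "T \<le> y" unfolding T_def using Sbdd y(1) by (intro cInf_lower)
    have "dist y T < e" using yT y(2) unfolding dist_real_def by simp
    hence "t < G T / y powr al" using e(2) by blast
    also have "\<dots> \<le> lam y" using lam_mono_ge[OF Tp yT] .
    finally show False using y(1) r unfolding S_def by simp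
  qed
  have Tx1: "x1 < T" using T1 lamT lx1 r by (cases "x1 = T") auto
  have "G T / T powr al < t" using lamT r unfolding lam_def by simp
  then obtain e where e: "e > 0" "\<forall>x. dist x T < e \<longrightarrow> G T / x powr al < t"
    using cont_below[OF Tp] by blast
  define y where "y = max x1 (T - e / 2)"
  have y: "x1 \<le> y" "y < T" "dist y T < e" using Tx1 e(1) unfolding y_def dist_real_def by auto
  have yp: "y > 0" using y(1) x1p by simp
  have "lam y \<le> G T / y powr al" using lam_mono_le[OF yp] y(2) by simp
  also have "\<dots> < t" using e(2) y(3) by blast
  finally have "lam y \<le> t - r" using H[OF yp] by linarith
  hence "y \<in> S" using y(1,2) T3 unfolding S_def by simp
  hence "T \<le> y" unfolding T_def using Sbdd by (intro cInf_lower)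
  thus False using y(2) by simp
qed

lemma to_unit: "x > 0 \<Longrightarrow> \<exists>y. 1 / real s \<le> y \<and> y < 1 \<and> lam y = lam x"
proof -
  assume x: "x > 0"
  obtain k where "1 / x < real s ^ k" using real_arch_pow[OF s_gt1] by blast
  hence y0: "1 \<le> real s ^ k * x" using x by (simp add: field_simps)
  define y0 where "y0 = real s ^ k * x"
  have ly0: "lam y0 = lam x" unfolding y0_def using lam_scale_pow[OF x] .
  obtain j0 where "y0 < real s ^ j0" using real_arch_pow[OF s_gt1] by blast
  define j where "j = (LEAST j. y0 < real s ^ j)"
  have j: "y0 < real s ^ j" unfolding j_def using \<open>y0 < real s ^ j0\<close> by (rule LeastI)
  have j0: "j \<noteq> 0" proof assume "j = 0" thus False using j y0 y0_def by simp qed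
  have jm: "\<not> y0 < real s ^ (j - 1)" unfolding j_def
    using j0 by (metis Least_le diff_less j_def less_numeral_extra(1) not_gr0 not_le)
  define y where "y = y0 / real s ^ j"
  have sj: "real s ^ j = real s * real s ^ (j-1)" using j0 by (metis power_eq_if)
  have pos: "real s ^ (j-1) > 0" using s_gt1 by simp
  have "1 / real s \<le> y" unfolding y_def sj using jm pos s_gt1
    by (simp add: field_simps)
  moreover have "y < 1" unfolding y_def using j pos s_gt1 by (simp add: field_simps)
  moreover have "lam y = lam x"
  proof -
    have yp: "y > 0" unfolding y_def using y0 y0_def s_gt1 by simp
    have "lam y0 = lam (real s ^ j * y)" unfolding y_def using s_gt1 by simp
    thus ?thesis using lam_scale_pow[OF yp] ly0 by simp
  qed
  ultimately show ?thesis by blast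
qed

end

context L begin

lemma seq_eq: "x > 0 \<Longrightarrow> a_real p s A (real s ^ k * x) / (real s ^ k * x) powr log (real s) (real p)
   = g k x / x powr al"
proof -
  assume x: "x > 0"
  have "(real s ^ k * x) powr al = real p ^ k * x powr al" using powk by (simp add: powr_mult)
  thus ?thesis unfolding a_real_def g_def N_def al_def[symmetric] by simp
qed

lemma lam_lim: "x > 0 \<Longrightarrow> (\<lambda>k. a_real p s A (real s ^ k * x) / (real s ^ k * x) powr log (real s) (real p)) \<longlonglongrightarrow> lam x"
  unfolding seq_eq lam_def by (intro tendsto_divide tendsto_const g_conv) auto

lemma seqb: "seq_b p s A = b" by (rule ext) (simp add: seq_b_def b_def al_def)

end

theorem mainTheorem9:
  fixes p s :: nat and A :: "nat set"
  assumes "p \<ge> 3" and "2 \<le> s" and "s < p"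
    and "A \<subseteq> {0..<p}" and "card A = s"
  defines "m \<equiv> (INF n\<in>{1::nat..}. seq_b p s A n)"
      and "M \<equiv> (SUP n\<in>{1::nat..}. seq_b p s A n)"
  shows "\<exists>lam :: real \<Rightarrow> real.
           (\<forall>x>0. (\<lambda>k. a_real p s A (real s ^ k * x) / (real s ^ k * x) powr log s p)
                    \<longlonglongrightarrow> lam x)
         \<and> (\<forall>x>0. lam (real s * x) = lam x)
         \<and> (\<forall>x>0. lam x \<in> {m..M})
         \<and> {m..M} \<subseteq> closure (lam ` {1 / real s..<1})"
proof -
  interpret L p s A using assms by unfold_locales
  have mm: "m = mb" "M = Mb" unfolding m_def M_def mb_def Mb_def seqb by simp_all
  have cl: "{mb..Mb} \<subseteq> closure (lam ` {1 / real s..<1})"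
  proof
    fix t assume t: "t \<in> {mb..Mb}"
    show "t \<in> closure (lam ` {1 / real s..<1})"
      unfolding closure_approachable
    proof (intro allI impI)
      fix e :: real assume e: "e > 0"
      obtain x where x: "x > 0" "\<bar>lam x - t\<bar> < e" using dens[of t e] t e by auto
      obtain y where y: "1 / real s \<le> y" "y < 1" "lam y = lam x" using to_unit[OF x(1)] by blast
      show "\<exists>z\<in>lam ` {1 / real s..<1}. dist z t < e"
      proof (rule bexI[of _ "lam y"])
        show "lam y \<in> lam ` {1 / real s..<1}" using y(1,2) by (intro imageI) simp
        show "dist (lam y) t < e" using y x(2) unfolding dist_real_def by simp
      qed
    qed
  qed
  show ?thesis
    unfolding mm
    using lam_lim lam_scale lam_range cl by (intro exI[of _ lam]) auto
qed


end
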